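(* Let $n\ge1$, $a_1,\dots,a_n,b\in\mathbb{Z}$, $m\in\mathbb{Z}$, $m\ne0$, and suppose the congruence $$a_1x_1+\dots+a_nx_n\equiv b\pmod m \qquad (1)$$ has at least one solution. Let $P_1=(a_1,\dots,a_n,m)\cdot|m|^{n-1}$ and $P_2=(a_1,m)\cdots(a_n,m)$. Then (1) has a base, and every base of (1) consists of exactly $P_1/P_2$ solutions (in particular $P_1/P_2$ is a positive integer, and all bases of (1) have the same number of elements).
   Context: $(c_1,\dots,c_k)$ denotes the positive greatest common divisor. A solution of (1) is a vector in $\mathbb{Z}^n$ satisfying (1); two solutions $X,Y$ are distinct if $X_i\not\equiv Y_i\pmod m$ for some $i$. For $i=1,\dots,n$ let $V_i\in\mathbb{Z}^n$ be the vector whose $i$-th coordinate is $\frac{m}{(a_i,m)}$ and whose other coordinates are $0$, and let $A\subseteq\mathbb{Z}^n$ be the $\mathbb{Z}$-module generated by $V_1,\dots,V_n$. Two solutions $X,Y$ of (1) are called independent if $X-Y\notin A$, and dependent otherwise. Solutions $X^1,\dots,X^s$ of (1) form a base of (1) if they are pairwise independent and every solution of (1) is congruent modulo $m$ (coordinatewise) to a vector of the form $X^j+\sum_{i=1}^n t_iV_i$ for some $j\in\{1,\dots,s\}$ and integers $t_i$ with $0\le t_i<(a_i,m)$. *)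

theory Defs
  imports "HOL-Number_Theory.Number_Theory"
begin

text \<open>Vectors of Z^n are represented as functions nat \<Rightarrow> int that vanish
  outside the index set {0..<n} (coordinate i of the paper is index i-1 here).\<close>

definition Zn :: "nat \<Rightarrow> (nat \<Rightarrow> int) set" where
  "Zn n = {x. \<forall>i\<ge>n. x i = 0}"

definition is_solution :: "nat \<Rightarrow> (nat \<Rightarrow> int) \<Rightarrow> int \<Rightarrow> int \<Rightarrow> (nat \<Rightarrow> int) \<Rightarrow> bool" where
  "is_solution n a b m X \<longleftrightarrow> X \<in> Zn n \<and> [(\<Sum>i<n. a i * X i) = b] (mod m)"

definition Vvec :: "(nat \<Rightarrow> int) \<Rightarrow> int \<Rightarrow> nat \<Rightarrow> (nat \<Rightarrow> int)" where
  "Vvec a m k = (\<lambda>i. if i = k then m div gcd (a k) m else 0)"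

definition Amod :: "nat \<Rightarrow> (nat \<Rightarrow> int) \<Rightarrow> int \<Rightarrow> (nat \<Rightarrow> int) set" where
  "Amod n a m = {v. \<exists>t :: nat \<Rightarrow> int. v = (\<lambda>i. \<Sum>k<n. t k * Vvec a m k i)}"

definition independent :: "nat \<Rightarrow> (nat \<Rightarrow> int) \<Rightarrow> int \<Rightarrow> (nat \<Rightarrow> int) \<Rightarrow> (nat \<Rightarrow> int) \<Rightarrow> bool" where
  "independent n a m X Y \<longleftrightarrow> (\<lambda>i. X i - Y i) \<notin> Amod n a m"

definition is_base :: "nat \<Rightarrow> (nat \<Rightarrow> int) \<Rightarrow> int \<Rightarrow> int \<Rightarrow> (nat \<Rightarrow> int) list \<Rightarrow> bool" where
  "is_base n a b m Xs \<longleftrightarrow>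
     (\<forall>j<length Xs. is_solution n a b m (Xs ! j)) \<and>
     (\<forall>j<length Xs. \<forall>k<length Xs. j \<noteq> k \<longrightarrow> independent n a m (Xs ! j) (Xs ! k)) \<and>
     (\<forall>Y. is_solution n a b m Y \<longrightarrow>
        (\<exists>j<length Xs. \<exists>t :: nat \<Rightarrow> int.
           (\<forall>i<n. 0 \<le> t i \<and> t i < gcd (a i) m) \<and>
           (\<forall>i<n. [Y i = (Xs ! j) i + (\<Sum>k<n. t k * Vvec a m k i)] (mod m))))"

end

theory Submission
  imports Defs
begin


lemma cnt_class:
  fixes q s r0 :: int
  assumes q: "q > 0" and s: "s \<ge> 0"
  shows "card {v\<in>{0..<q*s}. v mod q = r0 mod q} = nat s"
proof -
  have eq: "{v\<in>{0..<q*s}. v mod q = r0 mod q} = (\<lambda>j. r0 mod q + q*j) ` {0..<s}"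
  proof (rule Set.set_eqI)
    fix v show "v \<in> {v\<in>{0..<q*s}. v mod q = r0 mod q} \<longleftrightarrow> v \<in> (\<lambda>j. r0 mod q + q*j) ` {0..<s}"
    proof
      assume v: "v \<in> {v\<in>{0..<q*s}. v mod q = r0 mod q}"
      have "v = q * (v div q) + v mod q" by simp
      also have "v mod q = r0 mod q" using v by simp
      finally have "v = r0 mod q + q * (v div q)" by simp
      moreover have "v div q \<in> {0..<s}"
      proof -
        have "q * (v div q) = v - v mod q" by (simp add: minus_mod_eq_mult_div)
        also have "\<dots> \<le> v" using q by simp
        finally have "q * (v div q) < q * s" using v by simp
        hence "v div q < s" using q by simp
        moreover have "0 \<le> v div q" using v q by (simp add: pos_imp_zdiv_nonneg_iff)
        ultimately show ?thesis by simp
      qed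
      ultimately show "v \<in> (\<lambda>j. r0 mod q + q*j) ` {0..<s}" by blast
    next
      assume "v \<in> (\<lambda>j. r0 mod q + q*j) ` {0..<s}"
      then obtain j where j: "0 \<le> j" "j < s" "v = r0 mod q + q*j" by auto
      have r1: "r0 mod q < q" "0 \<le> r0 mod q" using q by auto
      have "q * (j + 1) \<le> q * s" using j q by (intro mult_left_mono) auto
      hence "q * j + q \<le> q * s" by (simp add: distrib_left)
      hence "v < q * s" "0 \<le> v" using r1 j(3) q j(1) by (linarith, simp)
      moreover have "v mod q = r0 mod q" using j(3) by simp
      ultimately show "v \<in> {v\<in>{0..<q*s}. v mod q = r0 mod q}" by simp
    qed
  qed
  have "inj_on (\<lambda>j. r0 mod q + q*j) {0..<s}" using q by (auto simp: inj_on_def)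
  thus ?thesis unfolding eq by (simp add: card_image)
qed



lemma one_var:
  fixes a c m D :: int
  assumes m: "m \<noteq> 0" and D: "D > 0" "D dvd m"
  shows "int (card {v\<in>{0..<\<bar>m div gcd a m\<bar>}. D dvd c - a*v}) * gcd a m * D
         = (if gcd a D dvd c then gcd a D * \<bar>m\<bar> else 0)"
proof -
  define g where "g = gcd a m"
  define h where "h = \<bar>m div g\<bar>"
  define e where "e = gcd a D"
  have gpos: "g > 0" using m by (simp add: g_def)
  have epos: "e > 0" using D by (simp add: e_def)
  have hg: "h * g = \<bar>m\<bar>"
  proof -
    have "m div g * g = m" by (simp add: g_def)
    hence "\<bar>m div g * g\<bar> = \<bar>m\<bar>" by simp
    thus ?thesis using gpos by (simp add: h_def abs_mult)
  qed
  show ?thesis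
  proof (cases "e dvd c")
    case False
    have "{v\<in>{0..<h}. D dvd c - a*v} = {}"
    proof (rule ccontr)
      assume "{v\<in>{0..<h}. D dvd c - a*v} \<noteq> {}"
      then obtain v where "D dvd c - a*v" by auto
      moreover have "e dvd D" by (simp add: e_def)
      ultimately have h1: "e dvd c - a*v" using dvd_trans by blast
      have h2: "e dvd a*v" by (simp add: e_def)
      have "e dvd (c - a*v) + a*v" using dvd_add[OF h1 h2] .
      hence "e dvd c" by simp
      thus False using False by simp
    qed
    hence "card {v\<in>{0..<h}. D dvd c - a*v} = 0" by (simp only: card.empty)
    thus ?thesis using False unfolding h_def g_def e_def by simp
  next
    case True
    then obtain c' where c': "c = e * c'" by blast
    obtain u v0 where uv: "u * a + v0 * D = e" using bezout_int[of a D] e_def by blast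
    define q where "q = D div e"
    define a' where "a' = a div e"
    have Dq: "D = e * q" by (simp add: q_def e_def)
    have aa: "a = e * a'" by (simp add: a'_def e_def)
    have cop: "coprime a' q" unfolding a'_def q_def e_def using D by (intro div_gcd_coprime) auto
    have qpos: "q > 0" using Dq D epos by (simp add: zero_less_mult_iff)
    define r0 where "r0 = u * c'"
    have key: "D dvd c - a*v \<longleftrightarrow> v mod q = r0 mod q" for v
    proof -
      have "c - a*v = a*(r0 - v) + D*(v0*c')"
        unfolding c' uv[symmetric] r0_def by (simp add: algebra_simps)
      hence "D dvd c - a*v \<longleftrightarrow> D dvd a*(r0 - v) + D*(v0*c')" by (simp only:)
      also have "\<dots> \<longleftrightarrow> D dvd a*(r0 - v)" by (rule dvd_add_left_iff) simp
      also have "\<dots> \<longleftrightarrow> q dvd a'*(r0 - v)" using Dq aa epos by (simp add: mult.assoc)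
      also have "\<dots> \<longleftrightarrow> q dvd (r0 - v)" using cop by (simp add: coprime_dvd_mult_right_iff coprime_commute)
      also have "\<dots> \<longleftrightarrow> v mod q = r0 mod q" by (simp add: mod_eq_dvd_iff dvd_diff_commute)
      finally show ?thesis .
    qed
    have "m dvd a * (m div g)"
    proof -
      have "a * (m div g) = (a div g) * m"
        by (metis g_def gcd_dvd1 gcd_dvd2 dvd_div_mult_self div_mult_swap mult.commute)
      thus ?thesis by simp
    qed
    hence "m dvd a * h" by (cases "m div g \<ge> 0") (simp_all add: h_def)
    hence "D dvd a * h" using D(2) dvd_trans by blast
    hence "D dvd gcd (h*a) (h*D)" by (simp add: mult.commute)
    also have "gcd (h*a) (h*D) = h * e" using gcd_mult_distrib_int[of h a D] by (simp add: h_def e_def)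
    finally have "e * q dvd e * h" using Dq by (simp add: mult.commute)
    hence "q dvd h" using epos by simp
    then obtain s where s: "h = q * s" by blast
    have "0 \<le> q * s" using s h_def by simp
    hence s0: "s \<ge> 0" using qpos by (simp add: zero_le_mult_iff)
    have "{v\<in>{0..<h}. D dvd c - a*v} = {v\<in>{0..<q*s}. v mod q = r0 mod q}" using key s by auto
    hence "card {v\<in>{0..<h}. D dvd c - a*v} = nat s" using cnt_class[OF qpos s0] by simp
    hence "int (card {v\<in>{0..<h}. D dvd c - a*v}) * g * D = s * g * (e * q)" using s0 Dq by simp
    also have "\<dots> = e * (h * g)" using s by (simp add: algebra_simps)
    also have "\<dots> = e * \<bar>m\<bar>" using hg by simp
    finally have fin: "int (card {v\<in>{0..<h}. D dvd c - a*v}) * g * D = e * \<bar>m\<bar>" .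
    have "e dvd c" using True .
    thus ?thesis using fin unfolding h_def g_def e_def by (simp only: if_True)
  qed
qed



definition FF :: "nat \<Rightarrow> (nat \<Rightarrow> int) \<Rightarrow> int \<Rightarrow> int \<Rightarrow> (nat \<Rightarrow> int) set" where
  "FF k a m c = {r. (\<forall>i\<ge>k. r i = 0) \<and> (\<forall>i<k. 0 \<le> r i \<and> r i < \<bar>m div gcd (a i) m\<bar>)
      \<and> m dvd (\<Sum>i<k. a i * r i) - c}"

lemma sum_upd:
  assumes "r \<in> FF k a m c'"
  shows "(\<Sum>i<Suc k. a i * (r(k:=v)) i) = (\<Sum>i<k. a i * r i) + a k * v"
proof -
  have "(\<Sum>i<k. a i * (r(k:=v)) i) = (\<Sum>i<k. a i * r i)" by (rule sum.cong) auto
  thus ?thesis by simp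
qed

lemma FF_Suc:
  "FF (Suc k) a m c = (\<Union>v\<in>{0..<\<bar>m div gcd (a k) m\<bar>}. (\<lambda>r. r(k:=v)) ` FF k a m (c - a k * v))"
proof (rule Set.set_eqI)
  fix r
  show "r \<in> FF (Suc k) a m c \<longleftrightarrow> r \<in> (\<Union>v\<in>{0..<\<bar>m div gcd (a k) m\<bar>}. (\<lambda>r. r(k:=v)) ` FF k a m (c - a k * v))"
  proof
    assume r: "r \<in> FF (Suc k) a m c"
    define r' where "r' = r(k:=0)"
    have "r' \<in> FF k a m (c - a k * r k)"
    proof -
      have 1: "\<forall>i\<ge>k. r' i = 0" using r by (auto simp: FF_def r'_def)
      have 2: "\<forall>i<k. 0 \<le> r' i \<and> r' i < \<bar>m div gcd (a i) m\<bar>" using r by (auto simp: FF_def r'_def)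
      have "(\<Sum>i<k. a i * r' i) = (\<Sum>i<k. a i * r i)" by (rule sum.cong) (auto simp: r'_def)
      hence "(\<Sum>i<k. a i * r' i) - (c - a k * r k) = (\<Sum>i<Suc k. a i * r i) - c" by simp
      moreover have "m dvd (\<Sum>i<Suc k. a i * r i) - c" using r unfolding FF_def by blast
      ultimately have "m dvd (\<Sum>i<k. a i * r' i) - (c - a k * r k)" by (simp add: algebra_simps)
      thus ?thesis using 1 2 by (simp add: FF_def)
    qed
    moreover have "r = r'(k := r k)" by (simp add: r'_def)
    moreover have "r k \<in> {0..<\<bar>m div gcd (a k) m\<bar>}" using r by (auto simp: FF_def)
    ultimately show "r \<in> (\<Union>v\<in>{0..<\<bar>m div gcd (a k) m\<bar>}. (\<lambda>r. r(k:=v)) ` FF k a m (c - a k * v))"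
      by blast
  next
    assume "r \<in> (\<Union>v\<in>{0..<\<bar>m div gcd (a k) m\<bar>}. (\<lambda>r. r(k:=v)) ` FF k a m (c - a k * v))"
    then obtain v r' where v: "v \<in> {0..<\<bar>m div gcd (a k) m\<bar>}" and r': "r' \<in> FF k a m (c - a k * v)"
      and rr: "r = r'(k:=v)" by blast
    have 1: "\<forall>i\<ge>Suc k. r i = 0" using r' rr by (auto simp: FF_def)
    have 2: "\<forall>i<Suc k. 0 \<le> r i \<and> r i < \<bar>m div gcd (a i) m\<bar>" using r' rr v
      by (auto simp: FF_def less_Suc_eq)
    have "(\<Sum>i<Suc k. a i * r i) - c = (\<Sum>i<k. a i * r' i) - (c - a k * v)"
      using sum_upd[OF r', of v] rr by simp
    moreover have "m dvd (\<Sum>i<k. a i * r' i) - (c - a k * v)" using r' unfolding FF_def by blast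
    ultimately have "m dvd (\<Sum>i<Suc k. a i * r i) - c" by (simp add: algebra_simps)
    thus "r \<in> FF (Suc k) a m c" using 1 2 by (simp add: FF_def)
  qed
qed

lemma count_FF:
  fixes m :: int
  assumes m: "m \<noteq> 0"
  shows "finite (FF k a m c) \<and> int (card (FF k a m c)) * (\<Prod>i<k. gcd (a i) m) * \<bar>m\<bar>
     = (if Gcd (insert m (a ` {..<k})) dvd c then Gcd (insert m (a ` {..<k})) * \<bar>m\<bar> ^ k else 0)"
proof (induction k arbitrary: c)
  case 0
  have "FF 0 a m c = (if m dvd c then {\<lambda>_. 0} else {})"
    by (auto simp: FF_def)
  thus ?case by simp
next
  case (Suc k)
  define D where "D = Gcd (insert m (a ` {..<k}))"
  define h where "h = \<bar>m div gcd (a k) m\<bar>"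
  define P where "P = (\<Prod>i<k. gcd (a i) m)"
  have "D \<noteq> 0" unfolding D_def using m by simp
  moreover have "D \<ge> 0" unfolding D_def by simp
  ultimately have Dpos: "D > 0" by simp
  have Ddvd: "D dvd m" unfolding D_def by (simp add: Gcd_dvd)
  have Dsuc: "Gcd (insert m (a ` {..<Suc k})) = gcd (a k) D"
    unfolding D_def by (simp add: lessThan_Suc gcd.left_commute)
  have inj: "inj_on (\<lambda>r. r(k:=v)) (FF k a m c')" for v c'
  proof (rule inj_onI)
    fix r r' assume h: "r \<in> FF k a m c'" "r' \<in> FF k a m c'" and eq: "r(k:=v) = r'(k:=v)"
    have rk: "r k = 0" "r' k = 0" using h unfolding FF_def by auto
    show "r = r'"
    proof (rule ext)
      fix i show "r i = r' i"
      proof (cases "i = k")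
        case True thus ?thesis using rk by simp
      next
        case False thus ?thesis using fun_cong[OF eq, of i] by simp
      qed
    qed
  qed
  have disj: "\<forall>v\<in>{0..<h}. \<forall>v'\<in>{0..<h}. v \<noteq> v' \<longrightarrow>
     ((\<lambda>r. r(k:=v)) ` FF k a m (c - a k * v)) \<inter> ((\<lambda>r. r(k:=v')) ` FF k a m (c - a k * v')) = {}"
  proof (intro ballI impI)
    fix v v' :: int assume vv: "v \<noteq> v'"
    show "((\<lambda>r. r(k:=v)) ` FF k a m (c - a k * v)) \<inter> ((\<lambda>r. r(k:=v')) ` FF k a m (c - a k * v')) = {}"
    proof (rule ccontr)
      assume "((\<lambda>r. r(k:=v)) ` FF k a m (c - a k * v)) \<inter> ((\<lambda>r. r(k:=v')) ` FF k a m (c - a k * v')) \<noteq> {}"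
      then obtain x where x1: "x \<in> (\<lambda>r. r(k:=v)) ` FF k a m (c - a k * v)"
        and x2: "x \<in> (\<lambda>r. r(k:=v')) ` FF k a m (c - a k * v')" by blast
      from x1 have "x k = v" by auto
      moreover from x2 have "x k = v'" by auto
      ultimately show False using vv by simp
    qed
  qed
  have fin: "finite (FF (Suc k) a m c)" unfolding FF_Suc using Suc.IH by auto
  have "card (FF (Suc k) a m c) = (\<Sum>v\<in>{0..<h}. card ((\<lambda>r. r(k:=v)) ` FF k a m (c - a k * v)))"
    unfolding FF_Suc h_def[symmetric]
  proof (rule card_UN_disjoint)
    show "finite {0..<h}" by simp
    show "\<forall>v\<in>{0..<h}. finite ((\<lambda>r. r(k:=v)) ` FF k a m (c - a k * v))" using Suc.IH by blast
    show "\<forall>v\<in>{0..<h}. \<forall>v'\<in>{0..<h}. v \<noteq> v' \<longrightarrow>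
     ((\<lambda>r. r(k:=v)) ` FF k a m (c - a k * v)) \<inter> ((\<lambda>r. r(k:=v')) ` FF k a m (c - a k * v')) = {}"
      by (rule disj)
  qed
  also have "\<dots> = (\<Sum>v\<in>{0..<h}. card (FF k a m (c - a k * v)))"
    by (rule sum.cong) (auto simp: card_image[OF inj])
  finally have "int (card (FF (Suc k) a m c)) * P * \<bar>m\<bar>
      = (\<Sum>v\<in>{0..<h}. int (card (FF k a m (c - a k * v))) * P * \<bar>m\<bar>)"
    by (simp add: sum_distrib_right)
  also have "\<dots> = (\<Sum>v\<in>{0..<h}. if D dvd (c - a k * v) then D * \<bar>m\<bar> ^ k else 0)"
    by (rule sum.cong) (use Suc.IH in \<open>auto simp: P_def D_def\<close>)
  also have "\<dots> = (\<Sum>v\<in>{v\<in>{0..<h}. D dvd (c - a k * v)}. D * \<bar>m\<bar> ^ k)"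
    by (rule sum.inter_filter[symmetric]) simp
  also have "\<dots> = int (card {v\<in>{0..<h}. D dvd (c - a k * v)}) * (D * \<bar>m\<bar> ^ k)"
    by simp
  finally have eq: "int (card (FF (Suc k) a m c)) * P * \<bar>m\<bar> =
     int (card {v\<in>{0..<h}. D dvd (c - a k * v)}) * (D * \<bar>m\<bar> ^ k)" .
  have ov: "int (card {v\<in>{0..<h}. D dvd c - a k * v}) * gcd (a k) m * D
         = (if gcd (a k) D dvd c then gcd (a k) D * \<bar>m\<bar> else 0)"
    unfolding h_def by (rule one_var[OF m Dpos Ddvd])
  have "int (card (FF (Suc k) a m c)) * (\<Prod>i<Suc k. gcd (a i) m) * \<bar>m\<bar>
      = (int (card (FF (Suc k) a m c)) * P * \<bar>m\<bar>) * gcd (a k) m"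
    by (simp add: P_def algebra_simps)
  also have "\<dots> = (int (card {v\<in>{0..<h}. D dvd c - a k * v}) * gcd (a k) m * D) * \<bar>m\<bar> ^ k"
    unfolding eq by (simp add: algebra_simps)
  also have "\<dots> = (if gcd (a k) D dvd c then gcd (a k) D * \<bar>m\<bar> ^ Suc k else 0)"
    unfolding ov by (simp add: algebra_simps)
  finally show ?case using fin Dsuc by simp
qed



definition red :: "nat \<Rightarrow> (nat \<Rightarrow> int) \<Rightarrow> int \<Rightarrow> (nat \<Rightarrow> int) \<Rightarrow> (nat \<Rightarrow> int)" where
  "red n a m X = (\<lambda>i. if i < n then X i mod \<bar>m div gcd (a i) m\<bar> else 0)"

lemma w_nz: "(m::int) \<noteq> 0 \<Longrightarrow> m div gcd (a i) m \<noteq> 0"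
  using dvd_div_eq_0_iff[of "gcd (a i) m" m] by simp

lemma gw: "gcd (a i) m * (m div gcd (a i) m) = (m::int)"
  by simp

lemma m_dvd_ah: "(m::int) dvd a i * \<bar>m div gcd (a i) m\<bar>"
proof -
  define g where "g = gcd (a i) m"
  define w where "w = m div g"
  have gw: "g * w = m" by (simp add: g_def w_def)
  obtain a' where a': "a i = g * a'" unfolding g_def by (meson dvdE gcd_dvd1)
  have "a i * w = a' * (g * w)" unfolding a' by (simp add: algebra_simps)
  also have "\<dots> = a' * m" by (simp only: gw)
  finally have "m dvd a i * w" by simp
  hence "m dvd a i * (m div gcd (a i) m)" by (simp add: w_def g_def)
  thus ?thesis by (cases "m div gcd (a i) m \<ge> 0") simp_all
qed

lemma Vsum: "(\<Sum>k<n. t k * Vvec a m k i) = (if i < n then t i * (m div gcd (a i) m) else 0)"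
proof -
  have "(\<Sum>k<n. t k * Vvec a m k i) = (\<Sum>k<n. if k = i then t i * (m div gcd (a i) m) else 0)"
    by (rule sum.cong) (auto simp: Vvec_def)
  thus ?thesis by simp
qed

lemma Amod_iff:
  assumes m: "m \<noteq> 0" and X: "X \<in> Zn n" and Y: "Y \<in> Zn n"
  shows "(\<lambda>i. X i - Y i) \<in> Amod n a m \<longleftrightarrow> (\<forall>i<n. (m div gcd (a i) m) dvd X i - Y i)"
proof
  assume "(\<lambda>i. X i - Y i) \<in> Amod n a m"
  then obtain t where t: "(\<lambda>i. X i - Y i) = (\<lambda>i. \<Sum>k<n. t k * Vvec a m k i)" by (auto simp: Amod_def)
  show "\<forall>i<n. (m div gcd (a i) m) dvd X i - Y i"
  proof (intro allI impI)
    fix i assume "i < n"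
    have "X i - Y i = (\<Sum>k<n. t k * Vvec a m k i)" using fun_cong[OF t, of i] by simp
    also have "\<dots> = t i * (m div gcd (a i) m)" using \<open>i < n\<close> by (simp add: Vsum)
    finally show "(m div gcd (a i) m) dvd X i - Y i" by simp
  qed
next
  assume d: "\<forall>i<n. (m div gcd (a i) m) dvd X i - Y i"
  define t where "t = (\<lambda>i. (X i - Y i) div (m div gcd (a i) m))"
  have "(\<lambda>i. X i - Y i) = (\<lambda>i. \<Sum>k<n. t k * Vvec a m k i)"
  proof
    fix i show "X i - Y i = (\<Sum>k<n. t k * Vvec a m k i)"
    proof (cases "i < n")
      case True thus ?thesis using d by (simp add: Vsum t_def)
    next
      case False thus ?thesis using X Y by (simp add: Vsum Zn_def)
    qed
  qed
  thus "(\<lambda>i. X i - Y i) \<in> Amod n a m" by (auto simp: Amod_def)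
qed

lemma red_eq_iff:
  assumes m: "m \<noteq> 0" and X: "X \<in> Zn n" and Y: "Y \<in> Zn n"
  shows "(\<lambda>i. X i - Y i) \<in> Amod n a m \<longleftrightarrow> red n a m X = red n a m Y"
proof -
  have "red n a m X = red n a m Y \<longleftrightarrow> (\<forall>i<n. X i mod \<bar>m div gcd (a i) m\<bar> = Y i mod \<bar>m div gcd (a i) m\<bar>)"
    by (auto simp: red_def fun_eq_iff)
  also have "\<dots> \<longleftrightarrow> (\<forall>i<n. (m div gcd (a i) m) dvd X i - Y i)"
    by (simp add: mod_eq_dvd_iff)
  finally show ?thesis using Amod_iff[OF m X Y] by simp
qed

lemma red_sol:
  assumes m: "m \<noteq> 0" and X: "is_solution n a b m X"
  shows "red n a m X \<in> FF n a m b"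
proof -
  have hpos: "\<bar>m div gcd (a i) m\<bar> > 0" for i using w_nz[OF m] by simp
  have d1: "m dvd (\<Sum>i<n. a i * X i) - b" using X by (simp add: is_solution_def cong_iff_dvd_diff)
  have "m dvd (\<Sum>i<n. a i * (X i - red n a m X i))"
  proof (rule dvd_sum)
    fix i assume "i \<in> {..<n}"
    hence "X i - red n a m X i = \<bar>m div gcd (a i) m\<bar> * (X i div \<bar>m div gcd (a i) m\<bar>)"
      by (simp add: red_def minus_mod_eq_mult_div)
    hence e2: "a i * (X i - red n a m X i) = (a i * \<bar>m div gcd (a i) m\<bar>) * (X i div \<bar>m div gcd (a i) m\<bar>)"
      by (simp only: mult.assoc)
    have "m dvd (a i * \<bar>m div gcd (a i) m\<bar>) * (X i div \<bar>m div gcd (a i) m\<bar>)"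
      by (rule dvd_mult2[OF m_dvd_ah])
    thus "m dvd a i * (X i - red n a m X i)" by (simp only: e2)
  qed
  hence "m dvd ((\<Sum>i<n. a i * X i) - b) - (\<Sum>i<n. a i * (X i - red n a m X i))"
    using d1 by (rule dvd_diff[rotated])
  also have "((\<Sum>i<n. a i * X i) - b) - (\<Sum>i<n. a i * (X i - red n a m X i)) = (\<Sum>i<n. a i * red n a m X i) - b"
    by (simp add: sum_subtractf algebra_simps)
  finally show ?thesis using hpos by (auto simp: FF_def red_def)
qed

lemma FF_sol:
  assumes "r \<in> FF n a m b"
  shows "is_solution n a b m r \<and> red n a m r = r"
  using assms by (auto simp: FF_def is_solution_def Zn_def cong_iff_dvd_diff red_def fun_eq_iff)



lemma base_len:
  assumes m: "m \<noteq> 0" and B: "is_base n a b m Xs"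
  shows "length Xs = card (FF n a m b)"
proof -
  have sol: "\<And>j. j < length Xs \<Longrightarrow> is_solution n a b m (Xs ! j)" using B by (simp add: is_base_def)
  have ind: "\<And>j k. j < length Xs \<Longrightarrow> k < length Xs \<Longrightarrow> j \<noteq> k \<Longrightarrow> independent n a m (Xs ! j) (Xs ! k)"
    using B by (simp add: is_base_def)
  have cov: "\<And>Y. is_solution n a b m Y \<Longrightarrow> (\<exists>j<length Xs. \<exists>t :: nat \<Rightarrow> int.
           (\<forall>i<n. 0 \<le> t i \<and> t i < gcd (a i) m) \<and>
           (\<forall>i<n. [Y i = (Xs ! j) i + (\<Sum>k<n. t k * Vvec a m k i)] (mod m)))"
    using B by (simp add: is_base_def)
  have Zn: "\<And>j. j < length Xs \<Longrightarrow> Xs ! j \<in> Zn n" using sol by (simp add: is_solution_def)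
  have "bij_betw (\<lambda>j. red n a m (Xs ! j)) {..<length Xs} (FF n a m b)"
  proof (rule bij_betw_imageI)
    show "inj_on (\<lambda>j. red n a m (Xs ! j)) {..<length Xs}"
    proof (rule inj_onI)
      fix j k assume j: "j \<in> {..<length Xs}" and k: "k \<in> {..<length Xs}"
        and e: "red n a m (Xs ! j) = red n a m (Xs ! k)"
      show "j = k"
      proof (rule ccontr)
        assume "j \<noteq> k"
        hence "independent n a m (Xs ! j) (Xs ! k)" using ind j k by auto
        thus False using e red_eq_iff[OF m Zn Zn, of j k a] j k by (simp add: independent_def)
      qed
    qed
  next
    show "(\<lambda>j. red n a m (Xs ! j)) ` {..<length Xs} = FF n a m b"
    proof (rule Set.set_eqI, rule iffI)
      fix r assume "r \<in> (\<lambda>j. red n a m (Xs ! j)) ` {..<length Xs}"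
      thus "r \<in> FF n a m b" using red_sol[OF m] sol by auto
    next
      fix r assume r: "r \<in> FF n a m b"
      hence rs: "is_solution n a b m r" and rr: "red n a m r = r" using FF_sol by auto
      obtain j t where j: "j < length Xs" and t: "\<forall>i<n. [r i = (Xs ! j) i + (\<Sum>k<n. t k * Vvec a m k i)] (mod m)"
        using cov[OF rs] by blast
      have "\<forall>i<n. (m div gcd (a i) m) dvd r i - (Xs ! j) i"
      proof (intro allI impI)
        fix i assume i: "i < n"
        have "m dvd r i - ((Xs ! j) i + t i * (m div gcd (a i) m))"
          using t i by (simp add: Vsum cong_iff_dvd_diff)
        moreover have wm: "(m div gcd (a i) m) dvd m" using dvd_triv_right[of "m div gcd (a i) m" "gcd (a i) m"] by (simp only: mult.commute gw)
        ultimately have "(m div gcd (a i) m) dvd r i - ((Xs ! j) i + t i * (m div gcd (a i) m))"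
          using dvd_trans by blast
        moreover have "(m div gcd (a i) m) dvd t i * (m div gcd (a i) m)" by simp
        ultimately have "(m div gcd (a i) m) dvd r i - ((Xs ! j) i + t i * (m div gcd (a i) m)) + t i * (m div gcd (a i) m)"
          by (rule dvd_add)
        moreover have "r i - ((Xs ! j) i + t i * (m div gcd (a i) m)) + t i * (m div gcd (a i) m) = r i - (Xs ! j) i"
          by simp
        ultimately show "(m div gcd (a i) m) dvd r i - (Xs ! j) i" by simp
      qed
      hence "(\<lambda>i. r i - (Xs ! j) i) \<in> Amod n a m"
        using Amod_iff[OF m _ Zn[OF j]] rs by (simp add: is_solution_def)
      hence "red n a m r = red n a m (Xs ! j)" using red_eq_iff[OF m _ Zn[OF j]] rs by (simp add: is_solution_def)
      thus "r \<in> (\<lambda>j. red n a m (Xs ! j)) ` {..<length Xs}" using rr j by auto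
    qed
  qed
  thus ?thesis using bij_betw_same_card by fastforce
qed

lemma base_exists:
  assumes m: "m \<noteq> 0"
  shows "\<exists>Xs. is_base n a b m Xs"
proof -
  have "finite (FF n a m b)" using count_FF[OF m] by blast
  then obtain xs where xs: "set xs = FF n a m b" "distinct xs" using finite_distinct_list by blast
  have inR: "\<And>j. j < length xs \<Longrightarrow> xs ! j \<in> FF n a m b" using xs by auto
  have "is_base n a b m xs"
    unfolding is_base_def
  proof (intro conjI allI impI)
    fix j assume "j < length xs"
    thus "is_solution n a b m (xs ! j)" using inR FF_sol by blast
  next
    fix j k assume j: "j < length xs" and k: "k < length xs" and jk: "j \<noteq> k"
    have "xs ! j \<noteq> xs ! k" using xs(2) j k jk by (simp add: nth_eq_iff_index_eq)
    moreover have "red n a m (xs ! j) = xs ! j" "red n a m (xs ! k) = xs ! k"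
      using FF_sol[OF inR[OF j]] FF_sol[OF inR[OF k]] by simp_all
    moreover have "xs ! j \<in> Zn n" "xs ! k \<in> Zn n" using FF_sol[OF inR[OF j]] FF_sol[OF inR[OF k]]
      by (simp_all add: is_solution_def)
    ultimately show "independent n a m (xs ! j) (xs ! k)"
      using red_eq_iff[OF m] by (simp add: independent_def)
  next
    fix Y assume Y: "is_solution n a b m Y"
    define r where "r = red n a m Y"
    have rR: "r \<in> FF n a m b" using red_sol[OF m Y] by (simp add: r_def)
    then obtain j where j: "j < length xs" and xj: "xs ! j = r" using xs by (metis in_set_conv_nth)
    have YZ: "Y \<in> Zn n" using Y by (simp add: is_solution_def)
    have rZ: "r \<in> Zn n" and rr: "red n a m r = r" using FF_sol[OF rR] by (simp_all add: is_solution_def)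
    have "(\<lambda>i. Y i - r i) \<in> Amod n a m" using red_eq_iff[OF m YZ rZ] rr by (simp add: r_def)
    hence dv: "\<forall>i<n. (m div gcd (a i) m) dvd Y i - r i" using Amod_iff[OF m YZ rZ] by simp
    define t where "t = (\<lambda>i. ((Y i - r i) div (m div gcd (a i) m)) mod gcd (a i) m)"
    show "\<exists>j<length xs. \<exists>t :: nat \<Rightarrow> int.
           (\<forall>i<n. 0 \<le> t i \<and> t i < gcd (a i) m) \<and>
           (\<forall>i<n. [Y i = (xs ! j) i + (\<Sum>k<n. t k * Vvec a m k i)] (mod m))"
    proof (intro exI[of _ j] conjI exI[of _ t] j allI impI)
      fix i assume "i < n"
      have gp: "gcd (a i) m > 0" using m by simp
      thus "0 \<le> t i" "t i < gcd (a i) m" by (simp_all add: t_def)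
    next
      fix i assume i: "i < n"
      define w where "w = m div gcd (a i) m"
      define g where "g = gcd (a i) m"
      define q where "q = (Y i - r i) div w"
      have Yq: "Y i - r i = q * w" using dv i by (simp add: q_def w_def)
      have ti: "t i = q mod g" by (simp add: t_def q_def w_def g_def)
      have gw': "g * w = m" by (simp add: g_def w_def)
      have "Y i - (r i + t i * w) = (q - q mod g) * w" using Yq ti by (simp add: algebra_simps)
      also have "\<dots> = (q div g) * (g * w)" by (simp add: minus_mod_eq_mult_div algebra_simps)
      finally have "m dvd Y i - (r i + t i * w)" using gw' by simp
      thus "[Y i = (xs ! j) i + (\<Sum>k<n. t k * Vvec a m k i)] (mod m)"
        using i xj by (simp add: Vsum cong_iff_dvd_diff w_def)
    qed
  qed
  thus ?thesis by blast
qed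

theorem theorem4:
  fixes n :: nat and a :: "nat \<Rightarrow> int" and b m :: int
  assumes "n \<ge> 1" and "m \<noteq> 0"
    and "\<exists>X. is_solution n a b m X"
  defines "P1 \<equiv> Gcd (insert m (a ` {..<n})) * \<bar>m\<bar> ^ (n - 1)"
    and "P2 \<equiv> (\<Prod>i<n. gcd (a i) m)"
  shows "P2 dvd P1 \<and> P1 div P2 > 0 \<and> (\<exists>Xs. is_base n a b m Xs) \<and>
         (\<forall>Xs. is_base n a b m Xs \<longrightarrow> int (length Xs) = P1 div P2)"
proof -
  note m = assms(2)
  obtain X where X: "is_solution n a b m X" using assms(3) by blast
  define D where "D = Gcd (insert m (a ` {..<n}))"
  have Dd: "D dvd b"
  proof -
    have "D dvd (\<Sum>i<n. a i * X i)" unfolding D_def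
      by (intro dvd_sum dvd_mult2) (rule Gcd_dvd, simp)
    moreover have "D dvd m" unfolding D_def by (simp add: Gcd_dvd)
    moreover have "m dvd (\<Sum>i<n. a i * X i) - b" using X by (simp add: is_solution_def cong_iff_dvd_diff)
    ultimately have "D dvd (\<Sum>i<n. a i * X i) - ((\<Sum>i<n. a i * X i) - b)"
      using dvd_trans dvd_diff by blast
    thus ?thesis by simp
  qed
  have cf: "finite (FF n a m b)" and ce: "int (card (FF n a m b)) * P2 * \<bar>m\<bar> = D * \<bar>m\<bar> ^ n"
    using count_FF[OF m, of n a b] Dd unfolding P2_def D_def by auto
  have "\<bar>m\<bar> ^ n = \<bar>m\<bar> ^ (n - 1) * \<bar>m\<bar>" using assms(1)
    by (cases n) (auto simp: mult.commute)
  hence "int (card (FF n a m b)) * P2 * \<bar>m\<bar> = P1 * \<bar>m\<bar>" using ce unfolding P1_def D_def by (simp add: mult.assoc)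
  hence cP: "int (card (FF n a m b)) * P2 = P1" using m by simp
  have P2pos: "P2 > 0" unfolding P2_def using m by (intro prod_pos) simp
  have "FF n a m b \<noteq> {}" using red_sol[OF m X] by auto
  hence cpos: "card (FF n a m b) > 0" using cf by (simp add: card_gt_0_iff)
  have dv: "P2 dvd P1" unfolding cP[symmetric] by simp
  have q: "P1 div P2 = int (card (FF n a m b))" using cP[symmetric] P2pos by simp
  show ?thesis using dv q cpos base_exists[OF m] base_len[OF m] by auto
qed


end
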